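(* Let $(\mathbb Q;+,1,\neq)$ be the structure on the rationals where $+$ is the ternary relation $\{(x,y,z):x+y=z\}$, $1$ is the constant $1$, and $\neq$ is the binary disequality relation. Then every $\omega$-polymorphism of $(\mathbb Q;+,1,\neq)$ is a projection.
   Context: An $\omega$-polymorphism of a structure $\mathfrak A$ is a homomorphism $\mathfrak A^\kappa\to\mathfrak A$ from a direct power with $\kappa\le\omega$ (relations and constants interpreted coordinatewise). A projection is a map $A^\kappa\to A$ of the form $\bar x\mapsto x_i$. *)

theory Defs
  imports Complex_Main "HOL-Library.FuncSet"
begin

definition qpow :: "nat set \<Rightarrow> (nat \<Rightarrow> rat) set" where
  "qpow I = PiE I (\<lambda>_. UNIV)"

text \<open>Index sets of cardinality \<open>\<kappa> \<le> \<omega>\<close>: a finite ordinal \<open>{..<n}\<close> or all of \<open>\<nat>\<close>.\<close>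
definition omega_arity :: "nat set \<Rightarrow> bool" where
  "omega_arity I \<longleftrightarrow> (\<exists>n. I = {..<n}) \<or> I = UNIV"

text \<open>Homomorphism \<open>(\<rat>;+,1,\<noteq>)^I \<rightarrow> (\<rat>;+,1,\<noteq>)\<close>, relations and constant coordinatewise.\<close>
definition qpol :: "nat set \<Rightarrow> ((nat \<Rightarrow> rat) \<Rightarrow> rat) \<Rightarrow> bool" where
  "qpol I f \<longleftrightarrow>
     (\<forall>x\<in>qpow I. \<forall>y\<in>qpow I. \<forall>z\<in>qpow I.
        (\<forall>i\<in>I. x i + y i = z i) \<longrightarrow> f x + f y = f z)
   \<and> f (\<lambda>i\<in>I. 1) = 1
   \<and> (\<forall>x\<in>qpow I. \<forall>y\<in>qpow I. (\<forall>i\<in>I. x i \<noteq> y i) \<longrightarrow> f x \<noteq> f y)"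

definition is_projection :: "nat set \<Rightarrow> ((nat \<Rightarrow> rat) \<Rightarrow> rat) \<Rightarrow> bool" where
  "is_projection I f \<longleftrightarrow> (\<exists>i\<in>I. \<forall>x\<in>qpow I. f x = x i)"

end

theory Submission
  imports Defs
begin

locale qp =
  fixes I :: "nat set" and f :: "(nat \<Rightarrow> rat) \<Rightarrow> rat"
  assumes pol: "qpol I f"
begin

definition S where "S x = {i\<in>I. x i = f x}"
definition C where "C = {x\<in>qpow I. finite (x ` I)}"

lemma restr_in: "(\<lambda>i\<in>I. g i) \<in> qpow I"
  by (simp add: qpow_def)

lemma qpow_restr: "x \<in> qpow I \<Longrightarrow> restrict x I = x"
  by (auto simp: qpow_def PiE_def extensional_def restrict_def)

lemma add: "x \<in> qpow I \<Longrightarrow> y \<in> qpow I \<Longrightarrow> f (\<lambda>i\<in>I. x i + y i) = f x + f y"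
proof -
  assume x: "x \<in> qpow I" and y: "y \<in> qpow I"
  have z: "(\<lambda>i\<in>I. x i + y i) \<in> qpow I" by (rule restr_in)
  have "\<forall>i\<in>I. x i + y i = (\<lambda>i\<in>I. x i + y i) i" by simp
  moreover note bspec[OF bspec[OF bspec[OF pol[unfolded qpol_def, THEN conjunct1] x] y] z]
  ultimately show ?thesis by (rule mp[rotated, THEN sym])
qed

lemma diseq: "x \<in> qpow I \<Longrightarrow> y \<in> qpow I \<Longrightarrow> (\<forall>i\<in>I. x i \<noteq> y i) \<Longrightarrow> f x \<noteq> f y"
  using pol[unfolded qpol_def, THEN conjunct2, THEN conjunct2] by blast

lemma one: "f (\<lambda>i\<in>I. 1) = 1"
  using pol[unfolded qpol_def, THEN conjunct2, THEN conjunct1] .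

lemma zero: "f (\<lambda>i\<in>I. 0) = 0"
proof -
  have "f (\<lambda>i\<in>I. (\<lambda>i\<in>I. 0) i + (\<lambda>i\<in>I. 0) i) = f (\<lambda>i\<in>I. 0) + f (\<lambda>i\<in>I. 0)"
    by (rule add; rule restr_in)
  moreover have "(\<lambda>i\<in>I. (\<lambda>i\<in>I. 0::rat) i + (\<lambda>i\<in>I. 0) i) = (\<lambda>i\<in>I. 0)"
    by (rule restrict_ext) simp
  ultimately show ?thesis by (metis add_cancel_right_right)
qed

lemma natmult: "x \<in> qpow I \<Longrightarrow> f (\<lambda>i\<in>I. of_nat n * x i) = of_nat n * f x"
proof (induction n)
  case 0
  have e: "(\<lambda>i\<in>I. of_nat 0 * x i) = (\<lambda>i\<in>I. (0::rat))" by (rule restrict_ext) simp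
  have "f (\<lambda>i\<in>I. of_nat 0 * x i) = 0" by (simp only: e zero)
  then show ?case by (metis mult_zero_left of_nat_0)
next
  case (Suc n)
  have h1: "f (\<lambda>i\<in>I. (\<lambda>i\<in>I. of_nat n * x i) i + x i) = f (\<lambda>i\<in>I. of_nat n * x i) + f x"
    by (rule add[OF restr_in Suc.prems])
  have h2: "(\<lambda>i\<in>I. (\<lambda>i\<in>I. of_nat n * x i) i + x i) = (\<lambda>i\<in>I. of_nat (Suc n) * x i)"
    by (rule restrict_ext) (simp add: algebra_simps)
  have h3: "f (\<lambda>i\<in>I. of_nat n * x i) = of_nat n * f x" using Suc by blast
  have "f (\<lambda>i\<in>I. of_nat (Suc n) * x i) = of_nat n * f x + f x"
    using h1 unfolding h2 h3 .
  also have "\<dots> = of_nat (Suc n) * f x" by (simp add: algebra_simps)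
  finally show ?case .
qed

lemma constnat: "f (\<lambda>i\<in>I. of_nat n) = of_nat n"
proof -
  have "f (\<lambda>i\<in>I. of_nat n * (\<lambda>i\<in>I. 1) i) = of_nat n * f (\<lambda>i\<in>I. 1)"
    by (rule natmult[OF restr_in])
  moreover have "(\<lambda>i\<in>I. of_nat n * (\<lambda>i\<in>I. (1::rat)) i) = (\<lambda>i\<in>I. of_nat n)"
    by (rule restrict_ext) simp
  ultimately show ?thesis using one by simp
qed

lemma constint: "f (\<lambda>i\<in>I. of_int p) = of_int p"
proof (cases "p \<ge> 0")
  case True
  then obtain n where "p = int n" by (metis nonneg_eq_int)
  then show ?thesis using constnat by simp
next
  case False
  define n where "n = nat (- p)"
  have p: "p = - int n" using False n_def by simp
  have "f (\<lambda>i\<in>I. (\<lambda>i\<in>I. of_int p) i + (\<lambda>i\<in>I. of_nat n) i) = f (\<lambda>i\<in>I. of_int p) + f (\<lambda>i\<in>I. of_nat n)"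
    by (rule add; rule restr_in)
  moreover have "(\<lambda>i\<in>I. (\<lambda>i\<in>I. of_int p) i + (\<lambda>i\<in>I. of_nat n) i) = (\<lambda>i\<in>I. (0::rat))"
    by (rule restrict_ext) (simp add: p)
  ultimately show ?thesis using zero constnat p by simp
qed

lemma const: "f (\<lambda>i\<in>I. c) = c"
proof -
  obtain p q where pq: "quotient_of c = (p, q)" by (cases "quotient_of c") auto
  have c: "c = of_int p / of_int q" using quotient_of_div[OF pq] .
  have q: "q > 0" using quotient_of_denom_pos[OF pq] .
  then obtain m where m: "q = int m" "m > 0" by (metis pos_int_cases of_nat_0_less_iff)
  have "f (\<lambda>i\<in>I. of_nat m * (\<lambda>i\<in>I. c) i) = of_nat m * f (\<lambda>i\<in>I. c)"
    by (rule natmult[OF restr_in])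
  moreover have "(\<lambda>i\<in>I. of_nat m * (\<lambda>i\<in>I. c) i) = (\<lambda>i\<in>I. of_int p)"
    by (rule restrict_ext) (use m c in simp)
  ultimately have "of_nat m * f (\<lambda>i\<in>I. c) = of_int p" using constint by (simp only:)
  moreover have "of_nat m * c = of_int p" using m c by simp
  ultimately have "of_nat m * f (\<lambda>i\<in>I. c) = of_nat m * c" by simp
  then show ?thesis using m by simp
qed

lemma P: "x \<in> qpow I \<Longrightarrow> \<exists>i\<in>I. x i = f x"
proof (rule ccontr)
  assume x: "x \<in> qpow I" and "\<not> (\<exists>i\<in>I. x i = f x)"
  then have "\<forall>i\<in>I. x i \<noteq> (\<lambda>i\<in>I. f x) i" by auto
  from diseq[OF x restr_in[of "\<lambda>_. f x"] this] const[of "f x"] show False by metis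
qed

lemma L1:
  assumes x: "x \<in> C" and y: "y \<in> C"
  shows "\<exists>n::nat. (\<lambda>i\<in>I. x i + of_nat n * y i) \<in> C \<and>
     S (\<lambda>i\<in>I. x i + of_nat n * y i) \<subseteq> S x \<inter> S y"
proof -
  define B where "B = (\<lambda>(p,q). (f x - p) / (q - f y)) ` ((\<lambda>i. (x i, y i)) ` I)"
  have fx: "finite (x ` I)" and fy: "finite (y ` I)" and xq: "x \<in> qpow I" and yq: "y \<in> qpow I"
    using x y by (auto simp: C_def)
  have "(\<lambda>i. (x i, y i)) ` I \<subseteq> x ` I \<times> y ` I" by auto
  then have "finite ((\<lambda>i. (x i, y i)) ` I)" using fx fy finite_subset by blast
  then have "finite B" unfolding B_def by simp
  then obtain r where r: "r \<in> (\<nat>::rat set)" "r \<notin> B"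
    using Nats_infinite by (metis ex_in_conv infinite_super subsetI Diff_infinite_finite Diff_iff)
  then obtain n where n: "r = of_nat n" by (auto elim: Nats_cases)
  let ?w = "\<lambda>i\<in>I. x i + of_nat n * y i"
  have fw: "f ?w = f x + of_nat n * f y"
  proof -
    have "f (\<lambda>i\<in>I. x i + (\<lambda>i\<in>I. of_nat n * y i) i) = f x + f (\<lambda>i\<in>I. of_nat n * y i)"
      by (rule add[OF xq restr_in])
    moreover have "(\<lambda>i\<in>I. x i + (\<lambda>i\<in>I. of_nat n * y i) i) = ?w"
      by (rule restrict_ext) simp
    ultimately show ?thesis using natmult[OF yq] by simp
  qed
  have "?w ` I \<subseteq> (\<lambda>(p,q). p + of_nat n * q) ` (x ` I \<times> y ` I)" by force
  then have "finite (?w ` I)" using fx fy by (meson finite_SigmaI finite_imageI finite_subset)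
  then have wC: "?w \<in> C" using restr_in by (simp add: C_def)
  have "S ?w \<subseteq> S x \<inter> S y"
  proof
    fix k assume "k \<in> S ?w"
    then have k: "k \<in> I" "x k + of_nat n * y k = f x + of_nat n * f y"
      using fw by (auto simp: S_def)
    show "k \<in> S x \<inter> S y"
    proof (cases "y k = f y")
      case True then show ?thesis using k by (auto simp: S_def)
    next
      case False
      then have "r = (f x - x k) / (y k - f y)" using k n by (simp add: field_simps)
      then have "r \<in> B" unfolding B_def using k(1) by force
      then show ?thesis using r by simp
    qed
  qed
  then show ?thesis using wC by blast
qed

lemma L2:
  assumes x0: "x0 \<in> C" "finite (S x0)"
  shows "\<exists>j\<in>I. \<forall>z\<in>C. z j = f z"
proof -
  define M where "M = {x\<in>C. finite (S x)}"
  have ex: "\<exists>k. \<exists>x\<in>M. card (S x) = k" using x0 M_def by blast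
  define k where "k = (LEAST k. \<exists>x\<in>M. card (S x) = k)"
  have k1: "\<exists>x\<in>M. card (S x) = k" unfolding k_def by (rule LeastI_ex[OF ex])
  have k2: "\<not> (\<exists>x\<in>M. card (S x) = k')" if "k' < k" for k'
    using that unfolding k_def by (rule not_less_Least)
  note k = k1 k2
  then obtain m where m: "m \<in> M" "card (S m) = k" by blast
  then have mC: "m \<in> C" and mf: "finite (S m)" by (auto simp: M_def)
  have "\<exists>i\<in>I. m i = f m" using P mC by (simp add: C_def)
  then obtain j where j: "j \<in> S m" by (auto simp: S_def)
  have "\<forall>z\<in>C. j \<in> S z"
  proof
    fix z assume z: "z \<in> C"
    obtain n :: nat where w: "(\<lambda>i\<in>I. m i + of_nat n * z i) \<in> C"
      "S (\<lambda>i\<in>I. m i + of_nat n * z i) \<subseteq> S m \<inter> S z"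
      using L1[OF mC z] by blast
    let ?w = "\<lambda>i\<in>I. m i + of_nat n * z i"
    have wf: "finite (S ?w)" using w mf finite_subset by blast
    then have "?w \<in> M" using w by (simp add: M_def)
    then have "\<not> card (S ?w) < k" using k2 by blast
    then have ck: "card (S m) \<le> card (S ?w)" using m by simp
    have sub: "S ?w \<subseteq> S m" using w by blast
    have "S ?w = S m" by (rule card_seteq[OF mf sub ck])
    then show "j \<in> S z" using w j by blast
  qed
  then show ?thesis using j by (auto simp: S_def)
qed

lemma L3:
  assumes j: "j \<in> I" "\<forall>z\<in>C. z j = f z"
  shows "is_projection I f"
  unfolding is_projection_def
proof (intro bexI[OF _ j(1)] ballI)
  fix a assume a: "a \<in> qpow I"
  show "f a = a j"
  proof (rule ccontr)
    assume ne: "f a \<noteq> a j"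
    let ?y = "\<lambda>i\<in>I. if i = j then f a else if a i = 0 then 1 else (0::rat)"
    have "?y ` I \<subseteq> {f a, 1, 0}" by (rule image_subsetI) simp
    then have "finite (?y ` I)" by (rule finite_subset) simp
    then have "?y \<in> C" using restr_in by (simp add: C_def)
    then have e1: "?y j = f ?y" using j(2) by blast
    have e2: "?y j = f a" using j(1) by simp
    have "\<forall>i\<in>I. ?y i \<noteq> a i" using ne by auto
    then have "f ?y \<noteq> f a" by (rule diseq[OF restr_in a])
    then show False using e1 e2 by simp
  qed
qed

end

theorem lemma9:
  fixes I :: "nat set" and f :: "(nat \<Rightarrow> rat) \<Rightarrow> rat"
  assumes "omega_arity I" and "qpol I f"
  shows "is_projection I f"
proof -
  interpret qp I f using assms(2) by unfold_locales
  consider n where "I = {..<n}" | "I = UNIV" using assms(1) omega_arity_def by blast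
  then show ?thesis
  proof cases
    case 1
    let ?x = "\<lambda>i\<in>I. (1::rat)"
    have "finite (?x ` I)" using 1 by simp
    then have "?x \<in> C" using restr_in by (simp add: C_def)
    moreover have "S ?x \<subseteq> I" by (auto simp: S_def)
    then have "finite (S ?x)" using 1 finite_subset by blast
    ultimately show ?thesis using L2 L3 by blast
  next
    case 2
    have qU: "qpow I = UNIV" using 2 by (simp add: qpow_def PiE_def extensional_def)
    define t where "t N = (\<lambda>i::nat. if N \<le> i then 1 else (0::rat))" for N
    show ?thesis
    proof (cases "\<exists>N. f (t N) \<noteq> 1")
      case True
      then obtain N where N: "f (t N) \<noteq> 1" by blast
      have "t N ` I \<subseteq> {0,1}" by (auto simp: t_def)
      then have "finite (t N ` I)" using finite_subset by blast
      then have tC: "t N \<in> C" using qU by (simp add: C_def)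
      obtain i where "t N i = f (t N)" using P qU by blast
      then have "f (t N) = 0" using N by (auto simp: t_def split: if_splits)
      then have "S (t N) = {..<N}" unfolding S_def using 2 by (auto simp: t_def)
      then have "finite (S (t N))" by simp
      then show ?thesis using L2[OF tC] L3 by blast
    next
      case False
      then have tN: "f (t N) = 1" for N by blast
      define a where "a = (\<lambda>i::nat. (of_nat i :: rat))"
      define c where "c = f a"
      define y where "y = (\<lambda>i::nat. c + (if of_nat i = c then 1 else 0))"
      have r: "restrict g I = g" for g :: "nat \<Rightarrow> rat" using 2 by (simp add: restrict_UNIV)
      have addU: "f (\<lambda>i. g i + h i) = f g + f h" for g h
        using add[of g h] qU r by simp
      have cU: "f (\<lambda>i. d) = d" for d using const[of d] r by simp
      have "f y = c"
      proof (cases "\<exists>n. of_nat n = c")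
        case True
        then obtain n where n: "of_nat n = c" by blast
        define e where "e = (\<lambda>i::nat. if i = n then 1 else (0::rat))"
        have tn: "t n = (\<lambda>i. e i + t (Suc n) i)" by (auto simp: t_def e_def)
        have "f (t n) = f e + f (t (Suc n))" by (subst tn) (rule addU)
        then have "f e = 0" using tN[of n] tN[of "Suc n"] by simp
        moreover have "y = (\<lambda>i. c + e i)"
          by (simp add: fun_eq_iff y_def e_def flip: n)
        ultimately show ?thesis using addU[of "\<lambda>_. c" e] cU by simp
      next
        case False
        then have "y = (\<lambda>_. c)" unfolding y_def by auto
        then show ?thesis using cU by simp
      qed
      moreover have "\<forall>i\<in>I. y i \<noteq> a i" unfolding y_def a_def by auto
      ultimately have False using diseq[of y a] qU c_def by auto
      then show ?thesis ..
    qed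
  qed
qed

end
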